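(* Let $K$ be a finite simplicial complex with an orientation $\sigma$ and a weight function $w$, and let $i\ge 0$. Then $$\lambda_{\max}(\mathcal L_i^{up}(K))\le \lambda_{\max}(\mathcal Q_i^{up}(K)),$$ with equality if $(B_i(K),\sigma)$ is balanced. If moreover $B_i(K)$ is connected (i.e. $K$ is $(i+1)$-path connected in the paper's sense), then equality holds if and only if $(B_i(K),\sigma)$ is balanced.
   Context: A simplicial complex $K$ is a family of subsets of a finite vertex set closed under subsets, containing $\emptyset$; $S_j(K)$ is the set of faces of cardinality $j+1$. An orientation assigns to each face an ordering of its vertices up to even permutations. For an oriented $(i+1)$-face $[\bar F]=[v_0,\dots,v_{i+1}]$ and an oriented $i$-face $[F]$, $\mathrm{sgn}([F],\partial[\bar F])=\pm(-1)^j$ if $F=\bar F\setminus\{v_j\}$ (sign $+$ iff $[F]$ has the orientation $[v_0,\dots,\hat v_j,\dots,v_{i+1}]$), and $0$ if $F\not\subset \bar F$. A weight function $w:K\to\mathbb R_{>0}$ gives diagonal matrices $W_j=\mathrm{diag}(w(F))_{F\in S_j(K)}$. $D_i$ is the $S_{i+1}(K)\times S_i(K)$ matrix with entries $\mathrm{sgn}([F],\partial[\bar F])$. The $i$-up Laplacian is $\mathcal L_i^{up}(K)=W_i^{-1}D_i^\top W_{i+1}D_i$ and the $i$-up signless Laplacian is $\mathcal Q_i^{up}(K)=W_i^{-1}|D_i|^\top W_{i+1}|D_i|$, where $|A|$ is the entrywise absolute value. Both have real spectra (they are self-adjoint w.r.t. the inner product $\sum_F w(F)f(F)g(F)$), and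 $\lambda_{\max}$ denotes the largest eigenvalue. The incidence graph $B_i(K)$ is the bipartite graph on $S_i(K)\cup S_{i+1}(K)$ with edges $\{F,\bar F\}$ for $F\subset\bar F$, signed by $\mathrm{sgn}([F],\partial[\bar F])$. A signed graph is balanced if every cycle has positive sign (product of its edge signs). *)

theory Defs
  imports Complex_Main
begin

definition simplicial_complex :: "'v set set \<Rightarrow> bool" where
  "simplicial_complex K \<longleftrightarrow> finite K \<and> {} \<in> K \<and> (\<forall>F\<in>K. \<forall>G. G \<subseteq> F \<longrightarrow> G \<in> K)"

definition faces :: "'v set set \<Rightarrow> nat \<Rightarrow> 'v set set" where
  "faces K j = {F \<in> K. card F = j + 1}"

text \<open>An orientation is given by a representative ordering of each face
  (a list of its distinct vertices); the orientation class is this ordering up to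
  even permutations.\<close>
definition is_orientation :: "'v set set \<Rightarrow> ('v set \<Rightarrow> 'v list) \<Rightarrow> bool" where
  "is_orientation K ori \<longleftrightarrow> (\<forall>F\<in>K. distinct (ori F) \<and> set (ori F) = F)"

definition is_weight :: "'v set set \<Rightarrow> ('v set \<Rightarrow> real) \<Rightarrow> bool" where
  "is_weight K w \<longleftrightarrow> (\<forall>F\<in>K. w F > 0)"

definition pos :: "'v list \<Rightarrow> 'v \<Rightarrow> nat" where
  "pos ys x = length (takeWhile (\<lambda>y. y \<noteq> x) ys)"

text \<open>Sign of the permutation carrying the ordering ys to the ordering xs
  (both lists of the same distinct elements), computed by counting inversions.\<close>
definition perm_sign :: "'v list \<Rightarrow> 'v list \<Rightarrow> real" where
  "perm_sign xs ys = (-1) ^ card {(k, l). k < l \<and> l < length xs \<and> pos ys (xs ! l) < pos ys (xs ! k)}"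

text \<open>sgn([F], \<partial>[Fb]) : if Fb = [v_0,...,v_{i+1}] and F = Fb minus v_j then
  (-1)^j times (+1 iff [F] has orientation [v_0,..,hat v_j,..,v_{i+1}]), else 0.\<close>
definition inc_sgn :: "('v set \<Rightarrow> 'v list) \<Rightarrow> 'v set \<Rightarrow> 'v set \<Rightarrow> real" where
  "inc_sgn ori F Fb =
     (if F \<subseteq> Fb \<and> card Fb = card F + 1 then
        (let v = the_elem (Fb - F); xs = ori Fb;
             j = pos xs v; ys = filter (\<lambda>x. x \<noteq> v) xs
         in (-1) ^ j * perm_sign (ori F) ys)
      else 0)"

text \<open>(W_i^{-1} D^T W_{i+1} D f)(F) with D entries given by s.\<close>
definition up_op :: "'v set set \<Rightarrow> ('v set \<Rightarrow> real) \<Rightarrow> ('v set \<Rightarrow> 'v set \<Rightarrow> real)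
                     \<Rightarrow> nat \<Rightarrow> ('v set \<Rightarrow> real) \<Rightarrow> 'v set \<Rightarrow> real" where
  "up_op K w s i f F = (1 / w F) *
      (\<Sum>Fb\<in>faces K (i+1). s F Fb * w Fb * (\<Sum>G\<in>faces K i. s G Fb * f G))"

definition up_eigenvalues :: "'v set set \<Rightarrow> ('v set \<Rightarrow> real) \<Rightarrow> ('v set \<Rightarrow> 'v set \<Rightarrow> real)
                     \<Rightarrow> nat \<Rightarrow> real set" where
  "up_eigenvalues K w s i = {mu. \<exists>f. (\<forall>F. F \<notin> faces K i \<longrightarrow> f F = 0) \<and> (\<exists>F\<in>faces K i. f F \<noteq> 0)
      \<and> (\<forall>F\<in>faces K i. up_op K w s i f F = mu * f F)}"

definition lmax_up_laplacian :: "'v set set \<Rightarrow> ('v set \<Rightarrow> 'v list) \<Rightarrow> ('v set \<Rightarrow> real) \<Rightarrow> nat \<Rightarrow> real" where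
  "lmax_up_laplacian K ori w i = Max (up_eigenvalues K w (inc_sgn ori) i)"

definition lmax_up_signless :: "'v set set \<Rightarrow> ('v set \<Rightarrow> 'v list) \<Rightarrow> ('v set \<Rightarrow> real) \<Rightarrow> nat \<Rightarrow> real" where
  "lmax_up_signless K ori w i = Max (up_eigenvalues K w (\<lambda>F Fb. \<bar>inc_sgn ori F Fb\<bar>) i)"

definition B_verts :: "'v set set \<Rightarrow> nat \<Rightarrow> 'v set set" where
  "B_verts K i = faces K i \<union> faces K (i+1)"

definition B_adj :: "'v set set \<Rightarrow> nat \<Rightarrow> 'v set \<Rightarrow> 'v set \<Rightarrow> bool" where
  "B_adj K i x y \<longleftrightarrow> (x \<in> faces K i \<and> y \<in> faces K (i+1) \<and> x \<subseteq> y)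
                      \<or> (y \<in> faces K i \<and> x \<in> faces K (i+1) \<and> y \<subseteq> x)"

definition B_edge_sign :: "('v set \<Rightarrow> 'v list) \<Rightarrow> 'v set \<Rightarrow> 'v set \<Rightarrow> real" where
  "B_edge_sign ori x y = (if x \<subseteq> y then inc_sgn ori x y else inc_sgn ori y x)"

definition B_cycle :: "'v set set \<Rightarrow> nat \<Rightarrow> 'v set list \<Rightarrow> bool" where
  "B_cycle K i cs \<longleftrightarrow> length cs \<ge> 3 \<and> distinct cs \<and>
     (\<forall>k < length cs. B_adj K i (cs ! k) (cs ! (Suc k mod length cs)))"

definition cycle_sign :: "('v set \<Rightarrow> 'v list) \<Rightarrow> 'v set list \<Rightarrow> real" where
  "cycle_sign ori cs = (\<Prod>k<length cs. B_edge_sign ori (cs ! k) (cs ! (Suc k mod length cs)))"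

definition B_balanced :: "'v set set \<Rightarrow> ('v set \<Rightarrow> 'v list) \<Rightarrow> nat \<Rightarrow> bool" where
  "B_balanced K ori i \<longleftrightarrow> (\<forall>cs. B_cycle K i cs \<longrightarrow> cycle_sign ori cs > 0)"

definition B_connected :: "'v set set \<Rightarrow> nat \<Rightarrow> bool" where
  "B_connected K i \<longleftrightarrow> (\<forall>x\<in>B_verts K i. \<forall>y\<in>B_verts K i. (B_adj K i)\<^sup>*\<^sup>* x y)"

end

theory Submission
  imports "HOL-Analysis.Function_Topology" "HOL-Analysis.Abstract_Limits" Defs
begin


lemma exists_max:
  fixes S :: "'a set" and T :: "'b set" and w :: "'a \<Rightarrow> real" and v :: "'b \<Rightarrow> real" and s :: "'a \<Rightarrow> 'b \<Rightarrow> real"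
  assumes finS: "finite S" and finT: "finite T" and ne: "S \<noteq> {}" and wpos: "\<forall>F\<in>S. w F > 0"
  shows "\<exists>f. (\<Sum>F\<in>S. w F * (f F)^2) = 1 \<and> (\<forall>g. (\<Sum>F\<in>S. w F * (g F)^2) = 1 \<longrightarrow>
     (\<Sum>b\<in>T. v b * (\<Sum>G\<in>S. s G b * g G)^2) \<le> (\<Sum>b\<in>T. v b * (\<Sum>G\<in>S. s G b * f G)^2))"
proof -
  define X where "X = product_topology (\<lambda>_. euclideanreal) S"
  define bnd where "bnd = 1 + (\<Sum>F\<in>S. 1 / w F)"
  define N where "N = (\<lambda>f::'a\<Rightarrow>real. \<Sum>F\<in>S. w F * (f F)^2)"
  define E where "E = (\<lambda>f::'a\<Rightarrow>real. \<Sum>b\<in>T. v b * (\<Sum>G\<in>S. s G b * f G)^2)"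
  define box where "box = PiE S (\<lambda>_. {-bnd..bnd})"
  define C where "C = {x \<in> topspace X. N x \<in> {1}} \<inter> box"
  have cN: "continuous_map X euclideanreal N"
    unfolding N_def X_def
    by (intro continuous_intros finS) auto
  have cE: "continuous_map X euclideanreal E"
    unfolding E_def X_def
    by (intro continuous_intros finS finT) auto
  have cbox: "compactin X box"
    unfolding X_def box_def by (subst compactin_PiE) auto
  have cC: "compactin X C"
    unfolding C_def
    by (intro closed_Int_compactin closedin_continuous_map_preimage[OF cN] cbox) auto
  have bnd_ge: "\<And>F. F \<in> S \<Longrightarrow> 1 / w F \<le> bnd" "1 \<le> bnd"
  proof -
    fix F assume "F \<in> S"
    have "1 / w F \<le> (\<Sum>F\<in>S. 1 / w F)"
      by (rule member_le_sum) (use \<open>F \<in> S\<close> wpos finS in auto)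
    then show "1 / w F \<le> bnd" unfolding bnd_def by simp
  next
    have "0 \<le> (\<Sum>F\<in>S. 1 / w F)" by (rule sum_nonneg) (use wpos in auto)
    then show "1 \<le> bnd" unfolding bnd_def by simp
  qed
  have inC: "restrict g S \<in> C" if "N g = 1" for g
  proof -
    have "restrict g S \<in> box"
    proof -
      { fix F assume F: "F \<in> S"
        have "w F * (g F)^2 \<le> N g"
          unfolding N_def by (rule member_le_sum) (use F wpos finS in auto)
        hence "w F * (g F)^2 \<le> 1" using that by simp
        hence "(g F)^2 \<le> 1 / w F" using wpos F by (simp add: field_simps)
        hence "(g F)^2 \<le> bnd" using bnd_ge(1)[OF F] by linarith
        also have "bnd \<le> bnd^2" using bnd_ge(2) by (simp add: power2_eq_square)
        finally have "(g F)^2 \<le> bnd^2" .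
        hence "\<bar>g F\<bar>^2 \<le> bnd^2" by simp
        hence "\<bar>g F\<bar> \<le> bnd" by (rule power2_le_imp_le) (use bnd_ge(2) in linarith)
        hence "g F \<in> {-bnd..bnd}" by auto }
      thus ?thesis unfolding box_def by auto
    qed
    moreover have "N (restrict g S) = 1" using that unfolding N_def by simp
    ultimately show ?thesis unfolding C_def X_def by auto
  qed
  obtain F0 where F0: "F0 \<in> S" using ne by auto
  define g0 where "g0 = (\<lambda>F. if F = F0 then 1 / sqrt (w F0) else 0)"
  have "N g0 = 1"
  proof -
    have "N g0 = (\<Sum>F\<in>S. if F = F0 then w F0 * (1 / sqrt (w F0))^2 else 0)"
      unfolding N_def g0_def by (rule sum.cong) auto
    also have "\<dots> = w F0 * (1 / sqrt (w F0))^2" using F0 finS by simp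
    also have "\<dots> = 1" proof - have "w F0 > 0" using wpos F0 by auto thus ?thesis by (simp add: power_divide) qed
    finally show ?thesis .
  qed
  hence Cne: "C \<noteq> {}" using inC by blast
  have "compact (E ` C)"
    using image_compactin[OF cC cE] by simp
  then obtain m where m: "m \<in> E ` C" "\<forall>t\<in>E ` C. t \<le> m"
    using compact_attains_sup[of "E ` C"] Cne by blast
  then obtain f where f: "f \<in> C" "E f = m" by auto
  have Nf: "N f = 1" using f(1) unfolding C_def by auto
  show ?thesis
  proof (intro exI conjI allI impI)
    show "(\<Sum>F\<in>S. w F * (f F)^2) = 1" using Nf unfolding N_def .
    fix g assume "(\<Sum>F\<in>S. w F * (g F)^2) = 1"
    hence "restrict g S \<in> C" using inC unfolding N_def by blast
    hence "E (restrict g S) \<le> m" using m(2) by blast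
    moreover have "E (restrict g S) = E g" unfolding E_def by simp
    ultimately have "E g \<le> E f" using f by simp
    thus "(\<Sum>b\<in>T. v b * (\<Sum>G\<in>S. s G b * g G)^2) \<le> (\<Sum>b\<in>T. v b * (\<Sum>G\<in>S. s G b * f G)^2)"
      unfolding E_def .
  qed
qed



definition Dv :: "('a \<Rightarrow> 'b \<Rightarrow> real) \<Rightarrow> 'a set \<Rightarrow> ('a \<Rightarrow> real) \<Rightarrow> 'b \<Rightarrow> real" where
  "Dv s S f b = (\<Sum>G\<in>S. s G b * f G)"
definition Nw :: "('a \<Rightarrow> real) \<Rightarrow> 'a set \<Rightarrow> ('a \<Rightarrow> real) \<Rightarrow> real" where
  "Nw w S g = (\<Sum>F\<in>S. w F * (g F)^2)"
definition IPw :: "('a \<Rightarrow> real) \<Rightarrow> 'a set \<Rightarrow> ('a \<Rightarrow> real) \<Rightarrow> ('a \<Rightarrow> real) \<Rightarrow> real" where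
  "IPw w S f g = (\<Sum>F\<in>S. w F * f F * g F)"
definition Ew :: "('b \<Rightarrow> real) \<Rightarrow> ('a \<Rightarrow> 'b \<Rightarrow> real) \<Rightarrow> 'a set \<Rightarrow> 'b set \<Rightarrow> ('a \<Rightarrow> real) \<Rightarrow> real" where
  "Ew w s S T g = (\<Sum>b\<in>T. w b * (Dv s S g b)^2)"

lemma quad_zero:
  fixes \<beta> \<gamma> :: real
  assumes "\<forall>t. 0 \<le> 2*t*\<beta> + t^2*\<gamma>"
  shows "\<beta> = 0"
proof (rule ccontr)
  assume nz: "\<beta> \<noteq> 0"
  show False
  proof (cases "\<gamma> \<le> 0")
    case True
    have "0 \<le> 2*(-\<beta>)*\<beta> + (-\<beta>)^2*\<gamma>" using assms by blast
    moreover have "(-\<beta>)^2*\<gamma> \<le> 0" using True by (simp add: mult_nonneg_nonpos)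
    moreover have "\<beta>*\<beta> > 0" using nz by (metis not_real_square_gt_zero)
    ultimately show False by (simp add: power2_eq_square)
  next
    case False
    have "0 \<le> 2*(-\<beta>/\<gamma>)*\<beta> + (-\<beta>/\<gamma>)^2*\<gamma>" using assms by blast
    also have "\<dots> = - (\<beta>*\<beta>)/\<gamma>" using False by (simp add: power2_eq_square field_simps)
    finally have "0 \<le> - (\<beta>*\<beta>)/\<gamma>" .
    moreover have "\<beta>*\<beta> > 0" using nz by (metis not_real_square_gt_zero)
    moreover have "\<gamma> > 0" using False by simp
    ultimately show False using divide_pos_pos[of "\<beta>*\<beta>" \<gamma>] by linarith
  qed
qed

lemma Dv_cong: "(\<And>G. G \<in> S \<Longrightarrow> f G = g G) \<Longrightarrow> Dv s S f b = Dv s S g b"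
  unfolding Dv_def by (rule sum.cong) auto

lemma Nw_nonneg: "\<forall>F\<in>S. w F > 0 \<Longrightarrow> Nw w S g \<ge> 0"
  unfolding Nw_def by (rule sum_nonneg) (simp add: less_imp_le)

lemma Nw_pos: assumes "finite S" "\<forall>F\<in>S. w F > 0" "F0 \<in> S" "g F0 \<noteq> 0" shows "Nw w S g > 0"
proof -
  have "0 < w F0 * (g F0)^2" using assms by auto
  also have "\<dots> \<le> Nw w S g" unfolding Nw_def
    by (rule member_le_sum) (use assms in \<open>auto simp: less_imp_le\<close>)
  finally show ?thesis .
qed

lemma Nw_zero: assumes "finite S" "\<forall>F\<in>S. w F > 0" "Nw w S g = 0" "F \<in> S" shows "g F = 0"
  using Nw_pos[OF assms(1,2,4)] assms(3) by force

lemma Dv_scale: "Dv s S (\<lambda>F. c * g F) b = c * Dv s S g b"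
  unfolding Dv_def by (simp add: sum_distrib_left mult_ac)

lemma Nw_scale: "Nw w S (\<lambda>F. c * g F) = c^2 * Nw w S g"
  unfolding Nw_def by (simp add: sum_distrib_left mult_ac power_mult_distrib)

lemma Ew_scale: "Ew w s S T (\<lambda>F. c * g F) = c^2 * Ew w s S T g"
  unfolding Ew_def Dv_scale by (simp add: sum_distrib_left mult_ac power_mult_distrib)

lemma up_op_scale: "up_op K w s i (\<lambda>F. c * g F) F = c * up_op K w s i g F"
  unfolding up_op_def by (simp add: sum_distrib_left mult_ac)

lemma IPw_sym: "IPw w S f g = IPw w S g f"
  unfolding IPw_def by (simp add: mult_ac)

lemma IPw_self: "IPw w S f f = Nw w S f"
  unfolding IPw_def Nw_def by (simp add: power2_eq_square mult_ac)

lemma IPw_sum_left: "IPw w S (\<lambda>F. \<Sum>m\<in>M. c m * x m F) y = (\<Sum>m\<in>M. c m * IPw w S (x m) y)"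
proof -
  have "IPw w S (\<lambda>F. \<Sum>m\<in>M. c m * x m F) y = (\<Sum>F\<in>S. \<Sum>m\<in>M. c m * (w F * x m F * y F))"
    unfolding IPw_def by (simp add: sum_distrib_left sum_distrib_right mult_ac)
  also have "\<dots> = (\<Sum>m\<in>M. \<Sum>F\<in>S. c m * (w F * x m F * y F))" by (rule sum.swap)
  also have "\<dots> = (\<Sum>m\<in>M. c m * IPw w S (x m) y)"
    unfolding IPw_def by (simp add: sum_distrib_left)
  finally show ?thesis .
qed

lemma IPw_diff: "IPw w S (\<lambda>F. x F - y F) (\<lambda>F. x F - y F) = IPw w S x x - 2 * IPw w S x y + IPw w S y y"
proof -
  have "IPw w S (\<lambda>F. x F - y F) (\<lambda>F. x F - y F) = (\<Sum>F\<in>S. w F * x F * x F - 2 * (w F * x F * y F) + w F * y F * y F)"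
    unfolding IPw_def by (rule sum.cong) (auto simp: algebra_simps)
  also have "\<dots> = IPw w S x x - 2 * IPw w S x y + IPw w S y y"
    unfolding IPw_def by (simp add: sum.distrib sum_subtractf sum_distrib_left)
  finally show ?thesis .
qed

lemma IPw_delta: "finite S \<Longrightarrow> F0 \<in> S \<Longrightarrow> IPw w S (\<lambda>F. if F = F0 then 1 else 0) y = w F0 * y F0"
proof -
  assume "finite S" "F0 \<in> S"
  have "IPw w S (\<lambda>F. if F = F0 then 1 else 0) y = (\<Sum>F\<in>S. if F = F0 then w F0 * y F0 else 0)"
    unfolding IPw_def by (rule sum.cong) auto
  thus ?thesis using \<open>finite S\<close> \<open>F0 \<in> S\<close> by simp
qed


context
  fixes K :: "'v set set" and w :: "'v set \<Rightarrow> real" and i :: nat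
  assumes finS: "finite (faces K i)" and finT: "finite (faces K (i+1))"
    and wS: "\<forall>F\<in>faces K i. w F > 0" and wT: "\<forall>F\<in>faces K (i+1). w F > 0"
    and neS: "faces K i \<noteq> {}"
begin

lemma pair_id:
  "(\<Sum>F\<in>faces K i. w F * g F * up_op K w s i f F)
     = (\<Sum>b\<in>faces K (i+1). w b * Dv s (faces K i) g b * Dv s (faces K i) f b)"
proof -
  have "(\<Sum>F\<in>faces K i. w F * g F * up_op K w s i f F)
      = (\<Sum>F\<in>faces K i. \<Sum>b\<in>faces K (i+1). g F * (s F b * w b * Dv s (faces K i) f b))"
  proof (rule sum.cong)
    fix F assume F: "F \<in> faces K i"
    have "w F \<noteq> 0" using wS F by auto
    thus "w F * g F * up_op K w s i f F = (\<Sum>b\<in>faces K (i+1). g F * (s F b * w b * Dv s (faces K i) f b))"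
      unfolding up_op_def Dv_def by (simp add: sum_distrib_left mult.assoc)
  qed simp
  also have "\<dots> = (\<Sum>b\<in>faces K (i+1). \<Sum>F\<in>faces K i. g F * (s F b * w b * Dv s (faces K i) f b))"
    by (rule sum.swap)
  also have "\<dots> = (\<Sum>b\<in>faces K (i+1). w b * Dv s (faces K i) g b * Dv s (faces K i) f b)"
  proof (rule sum.cong)
    fix b
    show "(\<Sum>F\<in>faces K i. g F * (s F b * w b * Dv s (faces K i) f b)) = w b * Dv s (faces K i) g b * Dv s (faces K i) f b"
      unfolding Dv_def[of s "faces K i" g b] by (simp add: sum_distrib_left sum_distrib_right mult_ac)
  qed simp
  finally show ?thesis .
qed



abbreviation "SS \<equiv> faces K i"
abbreviation "TT \<equiv> faces K (i+1)"

lemma eig_rayleigh: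
  assumes "\<forall>F\<in>SS. up_op K w s i h F = \<nu> * h F"
  shows "Ew w s SS TT h = \<nu> * Nw w SS h"
proof -
  have "Ew w s SS TT h = (\<Sum>F\<in>SS. w F * h F * up_op K w s i h F)"
    unfolding pair_id Ew_def by (simp add: power2_eq_square mult_ac)
  also have "\<dots> = (\<Sum>F\<in>SS. \<nu> * (w F * (h F)^2))"
    by (rule sum.cong) (use assms in \<open>auto simp: power2_eq_square\<close>)
  also have "\<dots> = \<nu> * Nw w SS h" unfolding Nw_def by (simp add: sum_distrib_left)
  finally show ?thesis .
qed

lemma eig_from_max:
  assumes le: "\<forall>g. Ew w s SS TT g \<le> \<mu> * Nw w SS g"
    and eq: "Ew w s SS TT f = \<mu> * Nw w SS f" and F0: "F0 \<in> SS"
  shows "up_op K w s i f F0 = \<mu> * f F0"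
proof -
  define \<delta> where "\<delta> = (\<lambda>G. if G = F0 then 1 else (0::real))"
  define c where "c = (\<Sum>b\<in>TT. w b * Dv s SS f b * s F0 b)"
  define a where "a = (\<Sum>b\<in>TT. w b * (s F0 b)^2)"
  have Dh: "Dv s SS (\<lambda>G. f G + t * \<delta> G) b = Dv s SS f b + t * s F0 b" for t b
  proof -
    have "Dv s SS (\<lambda>G. f G + t * \<delta> G) b = (\<Sum>G\<in>SS. s G b * f G + (if G = F0 then t * s F0 b else 0))"
      unfolding Dv_def \<delta>_def by (rule sum.cong) (auto simp: algebra_simps)
    thus ?thesis using F0 finS by (simp add: sum.distrib Dv_def)
  qed
  have Nh: "Nw w SS (\<lambda>G. f G + t * \<delta> G) = Nw w SS f + (2*t*(w F0 * f F0) + t^2 * w F0)" for t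
  proof -
    have "Nw w SS (\<lambda>G. f G + t * \<delta> G) = (\<Sum>F\<in>SS. w F * (f F)^2 + (if F = F0 then 2*t*(w F0 * f F0) + t^2 * w F0 else 0))"
      unfolding Nw_def \<delta>_def by (rule sum.cong) (auto simp: power2_eq_square algebra_simps)
    thus ?thesis using F0 finS unfolding Nw_def by (simp add: sum.distrib)
  qed
  have Eh: "Ew w s SS TT (\<lambda>G. f G + t * \<delta> G) = Ew w s SS TT f + (2*t*c + t^2*a)" for t
  proof -
    have "Ew w s SS TT (\<lambda>G. f G + t * \<delta> G) = (\<Sum>b\<in>TT. w b * (Dv s SS f b)^2 + (2*t*(w b * Dv s SS f b * s F0 b) + t^2*(w b * (s F0 b)^2)))"
      unfolding Ew_def Dh by (rule sum.cong) (auto simp: power2_eq_square algebra_simps)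
    thus ?thesis unfolding Ew_def c_def a_def by (simp add: sum.distrib sum_distrib_left)
  qed
  have "\<forall>t. 0 \<le> 2*t*(\<mu> * (w F0 * f F0) - c) + t^2*(\<mu> * w F0 - a)"
  proof
    fix t
    have "Ew w s SS TT (\<lambda>G. f G + t * \<delta> G) \<le> \<mu> * Nw w SS (\<lambda>G. f G + t * \<delta> G)" using le by blast
    hence "Ew w s SS TT f + (2*t*c + t^2*a) \<le> \<mu> * (Nw w SS f + (2*t*(w F0 * f F0) + t^2 * w F0))"
      unfolding Nh Eh .
    hence "2*t*c + t^2*a \<le> \<mu> * (2*t*(w F0 * f F0) + t^2 * w F0)" using eq by (simp add: algebra_simps)
    thus "0 \<le> 2*t*(\<mu> * (w F0 * f F0) - c) + t^2*(\<mu> * w F0 - a)" by (simp add: algebra_simps)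
  qed
  hence "\<mu> * (w F0 * f F0) - c = 0" by (rule quad_zero)
  moreover have "up_op K w s i f F0 = c / w F0"
    unfolding up_op_def c_def Dv_def by (simp add: mult_ac)
  moreover have "w F0 > 0" using wS F0 by auto
  ultimately have "up_op K w s i f F0 = (\<mu> * f F0) * w F0 / w F0" by (simp add: mult_ac)
  thus ?thesis using \<open>w F0 > 0\<close> by simp
qed

lemma exists_top:
  "\<exists>f \<mu>. (\<forall>F. F \<notin> SS \<longrightarrow> f F = 0) \<and> (\<exists>F\<in>SS. f F \<noteq> 0) \<and> (\<forall>F\<in>SS. up_op K w s i f F = \<mu> * f F)
      \<and> (\<forall>g. Ew w s SS TT g \<le> \<mu> * Nw w SS g)"
proof -
  have "\<exists>f0. Nw w SS f0 = 1 \<and> (\<forall>g. Nw w SS g = 1 \<longrightarrow> Ew w s SS TT g \<le> Ew w s SS TT f0)"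
    using exists_max[OF finS finT neS wS, where v=w and s=s] unfolding Nw_def Ew_def Dv_def .
  then obtain f0 where f0N: "Nw w SS f0 = 1" and f0max: "\<forall>g. Nw w SS g = 1 \<longrightarrow> Ew w s SS TT g \<le> Ew w s SS TT f0"
    by blast
  define \<mu> where "\<mu> = Ew w s SS TT f0"
  have le: "\<forall>g. Ew w s SS TT g \<le> \<mu> * Nw w SS g"
  proof
    fix g
    show "Ew w s SS TT g \<le> \<mu> * Nw w SS g"
    proof (cases "Nw w SS g = 0")
      case True
      hence "\<And>F. F \<in> SS \<Longrightarrow> g F = 0" using Nw_zero[OF finS wS] by blast
      hence "\<And>b. Dv s SS g b = 0" unfolding Dv_def by simp
      hence "Ew w s SS TT g = 0" unfolding Ew_def by simp
      thus ?thesis using True by simp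
    next
      case False
      hence Np: "Nw w SS g > 0" using Nw_nonneg[OF wS, of g] by simp
      define c where "c = 1 / sqrt (Nw w SS g)"
      have "Nw w SS (\<lambda>F. c * g F) = 1" unfolding Nw_scale c_def using Np by (simp add: power_divide)
      hence "Ew w s SS TT (\<lambda>F. c * g F) \<le> \<mu>" using f0max[rule_format, of "\<lambda>F. c * g F"] unfolding \<mu>_def by simp
      hence "Ew w s SS TT g / Nw w SS g \<le> \<mu>" unfolding Ew_scale c_def using Np by (simp add: power_divide)
      thus ?thesis using Np by (simp add: divide_le_eq mult.commute)
    qed
  qed
  define f where "f = (\<lambda>F. if F \<in> SS then f0 F else 0)"
  have "Nw w SS f = Nw w SS f0" unfolding Nw_def f_def by (rule sum.cong) auto
  moreover have "Ew w s SS TT f = Ew w s SS TT f0"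
  proof -
    have "\<And>b. Dv s SS f b = Dv s SS f0 b" by (rule Dv_cong) (simp add: f_def)
    thus ?thesis unfolding Ew_def by simp
  qed
  ultimately have eq: "Ew w s SS TT f = \<mu> * Nw w SS f" using f0N \<mu>_def by simp
  have "\<exists>F\<in>SS. f F \<noteq> 0"
  proof (rule ccontr)
    assume "\<not> ?thesis"
    hence "Nw w SS f = 0" unfolding Nw_def by simp
    thus False using \<open>Nw w SS f = Nw w SS f0\<close> f0N by simp
  qed
  moreover have "\<forall>F\<in>SS. up_op K w s i f F = \<mu> * f F" using eig_from_max[OF le eq] by blast
  moreover have "\<forall>F. F \<notin> SS \<longrightarrow> f F = 0" unfolding f_def by simp
  ultimately have "(\<forall>F. F \<notin> SS \<longrightarrow> f F = 0) \<and> (\<exists>F\<in>SS. f F \<noteq> 0) \<and> (\<forall>F\<in>SS. up_op K w s i f F = \<mu> * f F)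
      \<and> (\<forall>g. Ew w s SS TT g \<le> \<mu> * Nw w SS g)" using le by simp
  thus ?thesis by (intro exI)
qed


lemma eig_orth:
  assumes f: "\<forall>F\<in>SS. up_op K w s i f F = \<mu> * f F" and g: "\<forall>F\<in>SS. up_op K w s i g F = \<nu> * g F"
    and ne: "\<mu> \<noteq> \<nu>"
  shows "IPw w SS f g = 0"
proof -
  have B_sym: "(\<Sum>b\<in>TT. w b * Dv s SS g b * Dv s SS f b) = (\<Sum>b\<in>TT. w b * Dv s SS f b * Dv s SS g b)"
    by (simp add: mult_ac)
  have "\<mu> * IPw w SS f g = (\<Sum>F\<in>SS. w F * g F * up_op K w s i f F)"
    unfolding IPw_def sum_distrib_left by (rule sum.cong) (use f in auto)
  also have "\<dots> = (\<Sum>F\<in>SS. w F * f F * up_op K w s i g F)"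
    unfolding pair_id using B_sym by simp
  also have "\<dots> = \<nu> * IPw w SS f g"
    unfolding IPw_def sum_distrib_left by (rule sum.cong) (use g in auto)
  finally have "(\<mu> - \<nu>) * IPw w SS f g = 0" by (simp add: algebra_simps)
  thus ?thesis using ne by simp
qed

lemma bessel:
  assumes finM: "finite M"
    and u1: "\<And>m. m \<in> M \<Longrightarrow> Nw w SS (u m) = 1"
    and u0: "\<And>m m'. m \<in> M \<Longrightarrow> m' \<in> M \<Longrightarrow> m \<noteq> m' \<Longrightarrow> IPw w SS (u m) (u m') = 0"
    and F0: "F0 \<in> SS"
  shows "(\<Sum>m\<in>M. w F0 * (u m F0)^2) \<le> 1"
proof -
  define a where "a m = w F0 * u m F0" for m
  define \<delta> where "\<delta> = (\<lambda>G. if G = F0 then 1 else (0::real))"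
  define v where "v = (\<lambda>F. \<Sum>m\<in>M. a m * u m F)"
  have orth: "IPw w SS (u m) (u m') = (if m = m' then 1 else 0)" if "m \<in> M" "m' \<in> M" for m m'
    using u0 u1 that by (auto simp: IPw_self)
  have vu: "IPw w SS v (u m') = a m'" if "m' \<in> M" for m'
  proof -
    have "IPw w SS v (u m') = (\<Sum>m\<in>M. a m * IPw w SS (u m) (u m'))"
      unfolding v_def by (rule IPw_sum_left)
    also have "\<dots> = (\<Sum>m\<in>M. if m = m' then a m' else 0)"
      by (rule sum.cong) (use orth that in auto)
    also have "\<dots> = a m'" using finM that by simp
    finally show ?thesis .
  qed
  have vv: "IPw w SS v v = (\<Sum>m\<in>M. (a m)^2)"
  proof -
    have "IPw w SS v v = (\<Sum>m\<in>M. a m * IPw w SS (u m) v)"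
      unfolding v_def by (rule IPw_sum_left)
    also have "\<dots> = (\<Sum>m\<in>M. (a m)^2)"
      by (rule sum.cong) (auto simp: IPw_sym[of w SS _ v] vu power2_eq_square)
    finally show ?thesis .
  qed
  have dv: "IPw w SS \<delta> v = (\<Sum>m\<in>M. (a m)^2)"
    unfolding \<delta>_def IPw_delta[OF finS F0] v_def a_def
    by (simp add: sum_distrib_left power2_eq_square mult_ac)
  have dd: "IPw w SS \<delta> \<delta> = w F0"
    unfolding \<delta>_def IPw_delta[OF finS F0] by simp
  have "0 \<le> IPw w SS (\<lambda>F. \<delta> F - v F) (\<lambda>F. \<delta> F - v F)"
    unfolding IPw_self by (rule Nw_nonneg[OF wS])
  also have "\<dots> = w F0 - (\<Sum>m\<in>M. (a m)^2)"
    unfolding IPw_diff dv dd vv by simp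
  finally have "(\<Sum>m\<in>M. (a m)^2) \<le> w F0" by simp
  moreover have "(\<Sum>m\<in>M. (a m)^2) = w F0 * (\<Sum>m\<in>M. w F0 * (u m F0)^2)"
    unfolding a_def by (simp add: sum_distrib_left power_mult_distrib power2_eq_square mult_ac)
  moreover have "w F0 > 0" using wS F0 by auto
  ultimately show ?thesis by (simp add: mult_le_cancel_left1)
qed

lemma eig_finite: "finite (up_eigenvalues K w s i)"
proof (rule ccontr)
  assume inf: "infinite (up_eigenvalues K w s i)"
  then obtain M where M: "M \<subseteq> up_eigenvalues K w s i" "finite M" "card M = Suc (card SS)"
    using infinite_arbitrarily_large by blast
  define P where "P m f \<longleftrightarrow> (\<forall>F. F \<notin> SS \<longrightarrow> f F = 0) \<and> (\<exists>F\<in>SS. f F \<noteq> 0) \<and> (\<forall>F\<in>SS. up_op K w s i f F = m * f F)" for m f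
  define e where "e m = (SOME f. P m f)" for m
  have Pe: "P m (e m)" if "m \<in> M" for m
  proof -
    have "\<exists>f. P m f" using M(1) that unfolding up_eigenvalues_def P_def by blast
    thus ?thesis unfolding e_def by (rule someI_ex)
  qed
  define u where "u m = (\<lambda>F. (1 / sqrt (Nw w SS (e m))) * e m F)" for m
  have Npos: "Nw w SS (e m) > 0" if "m \<in> M" for m
    using Pe[OF that] Nw_pos[OF finS wS] unfolding P_def by blast
  have u1: "Nw w SS (u m) = 1" if "m \<in> M" for m
    unfolding u_def Nw_scale using Npos[OF that] by (simp add: power_divide)
  have ueig: "\<forall>F\<in>SS. up_op K w s i (u m) F = m * u m F" if "m \<in> M" for m
    unfolding u_def up_op_scale using Pe[OF that] unfolding P_def by simp
  have u0: "IPw w SS (u m) (u m') = 0" if "m \<in> M" "m' \<in> M" "m \<noteq> m'" for m m'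
    by (rule eig_orth[OF ueig[OF that(1)] ueig[OF that(2)] that(3)])
  have "real (card M) = (\<Sum>m\<in>M. Nw w SS (u m))" using u1 by simp
  also have "\<dots> = (\<Sum>F\<in>SS. \<Sum>m\<in>M. w F * (u m F)^2)"
    unfolding Nw_def by (rule sum.swap)
  also have "\<dots> \<le> (\<Sum>F\<in>SS. 1)"
    by (rule sum_mono) (rule bessel[OF M(2) u1 u0]; assumption)
  also have "\<dots> = real (card SS)" by simp
  finally show False using M(3) by simp
qed

lemma spec:
  "finite (up_eigenvalues K w s i) \<and> Max (up_eigenvalues K w s i) \<in> up_eigenvalues K w s i
    \<and> (\<forall>g. Ew w s SS TT g \<le> Max (up_eigenvalues K w s i) * Nw w SS g)"
proof -
  obtain f \<mu> where fm: "(\<forall>F. F \<notin> SS \<longrightarrow> f F = 0) \<and> (\<exists>F\<in>SS. f F \<noteq> 0) \<and> (\<forall>F\<in>SS. up_op K w s i f F = \<mu> * f F)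
      \<and> (\<forall>g. Ew w s SS TT g \<le> \<mu> * Nw w SS g)"
    using exists_top[of s] by (elim exE) (rule that)
  have le: "\<forall>g. Ew w s SS TT g \<le> \<mu> * Nw w SS g" using fm by (elim conjE)
  have mem: "\<mu> \<in> up_eigenvalues K w s i" unfolding up_eigenvalues_def mem_Collect_eq
    by (rule exI[of _ f]) (use fm in \<open>elim conjE, intro conjI\<close>)
  have "\<nu> \<le> \<mu>" if nu_mem: "\<nu> \<in> up_eigenvalues K w s i" for \<nu>
  proof -
    obtain h where h: "(\<forall>F. F \<notin> SS \<longrightarrow> h F = 0) \<and> (\<exists>F\<in>SS. h F \<noteq> 0) \<and> (\<forall>F\<in>SS. up_op K w s i h F = \<nu> * h F)"
      using nu_mem unfolding up_eigenvalues_def mem_Collect_eq by (elim exE) (rule that)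
    obtain F1 where F1: "F1 \<in> SS" "h F1 \<noteq> 0" using h by (elim conjE bexE)
    have eg: "\<forall>F\<in>SS. up_op K w s i h F = \<nu> * h F" using h by (elim conjE)
    have Np: "Nw w SS h > 0" by (rule Nw_pos[where g=h, OF finS wS F1])
    have "\<nu> * Nw w SS h = Ew w s SS TT h" using eig_rayleigh[OF eg] by simp
    also have "\<dots> \<le> \<mu> * Nw w SS h" using le by (rule spec)
    finally show ?thesis using Np by simp
  qed
  hence "Max (up_eigenvalues K w s i) = \<mu>" using mem eig_finite by (intro Max_eqI) auto
  thus ?thesis using mem eig_finite le by simp
qed


end



fun walk :: "('a \<Rightarrow> 'a \<Rightarrow> bool) \<Rightarrow> 'a list \<Rightarrow> bool" where
  "walk A (x # y # r) = (A x y \<and> walk A (y # r))"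
| "walk A _ = True"

fun wsign :: "('a \<Rightarrow> 'a \<Rightarrow> real) \<Rightarrow> 'a list \<Rightarrow> real" where
  "wsign \<sigma> (x # y # r) = \<sigma> x y * wsign \<sigma> (y # r)"
| "wsign \<sigma> _ = 1"

lemma walk_Cons: "walk A (x # ys) = (ys = [] \<or> (A x (hd ys) \<and> walk A ys))"
  by (cases ys) auto

lemma wsign_Cons: "wsign \<sigma> (x # ys) = (if ys = [] then 1 else \<sigma> x (hd ys) * wsign \<sigma> ys)"
  by (cases ys) auto

lemma walk_append: "walk A (xs @ y # ys) = (walk A (xs @ [y]) \<and> walk A (y # ys))"
proof (induction xs)
  case Nil thus ?case by simp
next
  case (Cons x xs) thus ?case by (cases xs) auto
qed

lemma wsign_append: "wsign \<sigma> (xs @ y # ys) = wsign \<sigma> (xs @ [y]) * wsign \<sigma> (y # ys)"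
proof (induction xs)
  case Nil thus ?case by simp
next
  case (Cons x xs) thus ?case by (cases xs) auto
qed

lemma wsign_pm:
  assumes pm: "\<And>x y. A x y \<Longrightarrow> \<sigma> x y = 1 \<or> \<sigma> x y = -1"
  shows "walk A p \<Longrightarrow> wsign \<sigma> p = 1 \<or> wsign \<sigma> p = -1"
proof (induction p)
  case (Cons x p)
  show ?case
  proof (cases p)
    case (Cons y r)
    have "A x y" "walk A p" using Cons.prems \<open>p = y # r\<close> by auto
    hence "\<sigma> x y = 1 \<or> \<sigma> x y = -1" "wsign \<sigma> p = 1 \<or> wsign \<sigma> p = -1" using pm Cons.IH by auto
    thus ?thesis using \<open>p = y # r\<close> by auto
  qed simp
qed auto

lemma walk_rev:
  assumes sym: "\<And>x y. A x y \<Longrightarrow> A y x"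
  shows "walk A p \<Longrightarrow> walk A (rev p)"
proof (induction p)
  case (Cons x p)
  show ?case
  proof (cases p)
    case (Cons y r)
    hence "walk A (rev r @ [y])" "A x y" using Cons.IH Cons.prems \<open>p = y # r\<close> by auto
    thus ?thesis using walk_append[of A "rev r" y "[x]"] sym \<open>p = y # r\<close> by simp
  qed simp
qed auto

lemma wsign_rev:
  assumes sym: "\<And>x y. \<sigma> x y = \<sigma> y x"
  shows "wsign \<sigma> (rev p) = wsign \<sigma> p"
proof (induction p)
  case (Cons x p)
  show ?case
  proof (cases p)
    case (Cons y r)
    thus ?thesis using Cons.IH wsign_append[of \<sigma> "rev r" y "[x]"] sym[of x y] by (simp add: mult.commute)
  qed simp
qed auto

lemma walk_snoc_iff: "walk A (xs @ [z]) = (\<forall>k<length xs. A (xs ! k) ((xs @ [z]) ! Suc k))"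
proof (induction xs)
  case Nil thus ?case by simp
next
  case (Cons x xs)
  have "walk A ((x # xs) @ [z]) = (A x ((xs @ [z]) ! 0) \<and> walk A (xs @ [z]))"
    by (simp add: walk_Cons hd_conv_nth)
  also have "\<dots> = (\<forall>k<length (x # xs). A ((x # xs) ! k) (((x # xs) @ [z]) ! Suc k))"
    using Cons by (simp add: All_less_Suc2)
  finally show ?case .
qed

lemma wsign_snoc_prod: "wsign \<sigma> (xs @ [z]) = (\<Prod>k<length xs. \<sigma> (xs ! k) ((xs @ [z]) ! Suc k))"
proof (induction xs)
  case Nil thus ?case by simp
next
  case (Cons x xs)
  have "wsign \<sigma> ((x # xs) @ [z]) = \<sigma> x ((xs @ [z]) ! 0) * wsign \<sigma> (xs @ [z])"
    by (simp add: wsign_Cons hd_conv_nth)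
  also have "\<dots> = (\<Prod>k<length (x # xs). \<sigma> ((x # xs) ! k) (((x # xs) @ [z]) ! Suc k))"
    using Cons by (simp del: prod.lessThan_Suc add: prod.lessThan_Suc_shift)
  finally show ?case .
qed

lemma snoc_hd_nth: "cs \<noteq> [] \<Longrightarrow> k < length cs \<Longrightarrow> (cs @ [hd cs]) ! Suc k = cs ! (Suc k mod length cs)"
proof -
  assume ne: "cs \<noteq> []" and k: "k < length cs"
  show ?thesis
  proof (cases "Suc k < length cs")
    case True thus ?thesis by (simp add: nth_append)
  next
    case False
    hence "Suc k = length cs" using k by simp
    thus ?thesis using ne by (simp add: nth_append hd_conv_nth)
  qed
qed

lemma rtranclp_walk:
  "A\<^sup>*\<^sup>* a b \<Longrightarrow> \<exists>p. walk A p \<and> p \<noteq> [] \<and> hd p = a \<and> last p = b"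
proof (induction rule: rtranclp_induct)
  case base
  show ?case by (intro exI[of _ "[a]"]) simp
next
  case (step y z)
  then obtain p where p: "walk A p" "p \<noteq> []" "hd p = a" "last p = y" by blast
  have pe: "p = butlast p @ [y]" using p by (metis append_butlast_last_id)
  have "walk A (butlast p @ y # [z])" using walk_append[of A "butlast p" y "[z]"] p(1) pe step(2) by simp
  hence "walk A (p @ [z])" using pe by (metis append.assoc append_Cons append_Nil)
  thus ?case using p by (intro exI[of _ "p @ [z]"]) (simp add: hd_append)
qed

lemma closed_walk_sign:
  assumes irr: "\<And>x. \<not> A x x" and sym: "\<And>x y. \<sigma> x y = \<sigma> y x"
    and pm: "\<And>x y. A x y \<Longrightarrow> \<sigma> x y = 1 \<or> \<sigma> x y = -1"
    and cyc: "\<And>cs. 3 \<le> length cs \<Longrightarrow> distinct cs \<Longrightarrow> walk A (cs @ [hd cs]) \<Longrightarrow> wsign \<sigma> (cs @ [hd cs]) > 0"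
  shows "walk A p \<Longrightarrow> p \<noteq> [] \<Longrightarrow> hd p = last p \<Longrightarrow> wsign \<sigma> p = 1"
proof (induction "length p" arbitrary: p rule: less_induct)
  case less
  show ?case
  proof (cases "length p = 1")
    case True
    then obtain x where "p = [x]" by (cases p) auto
    thus ?thesis by simp
  next
    case False
    define cs where "cs = butlast p"
    have cs_ne: "cs \<noteq> []" using False less.prems(2) unfolding cs_def by (cases p) auto
    have hdcs: "hd cs = hd p" using cs_ne unfolding cs_def by (metis append_butlast_last_id hd_append2 less.prems(2))
    have p_eq: "p = cs @ [hd cs]" using less.prems(2,3) hdcs unfolding cs_def by simp
    show ?thesis
    proof (cases "distinct cs")
      case True
      show ?thesis
      proof (cases "length cs \<ge> 3")
        case True
        have "wsign \<sigma> p > 0" using cyc[OF True \<open>distinct cs\<close>] less.prems(1) p_eq by simp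
        moreover have "wsign \<sigma> p = 1 \<or> wsign \<sigma> p = -1" using wsign_pm[of A \<sigma>, OF pm less.prems(1)] by blast
        ultimately show ?thesis by auto
      next
        case False
        moreover have "length cs > 0" using cs_ne by simp
        ultimately have "length cs = 1 \<or> length cs = 2" by linarith
        thus ?thesis
        proof
          assume "length cs = 1"
          then obtain x where "cs = [x]" by (cases cs) auto
          thus ?thesis using less.prems(1) p_eq irr by simp
        next
          assume "length cs = 2"
          then obtain x y where xy: "cs = [x, y]" by (auto simp: length_Suc_conv numeral_2_eq_2)
          hence "A x y" using less.prems(1) p_eq by simp
          hence "\<sigma> x y * \<sigma> x y = 1" using pm[OF \<open>A x y\<close>] by auto
          thus ?thesis using xy p_eq sym[of y x] by simp
        qed
      qed
    next
      case False
      then obtain a v b c where dec: "cs = a @ [v] @ b @ [v] @ c" using not_distinct_decomp by blast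
      define x where "x = hd cs"
      have p2: "p = a @ v # (b @ v # (c @ [x]))" using p_eq dec x_def by simp
      have w1: "walk A (a @ [v])" and w2: "walk A (v # b @ v # c @ [x])"
        using less.prems(1) p2 walk_append[of A a v "b @ v # c @ [x]"] by auto
      have w3: "walk A (v # b @ [v])" and w4: "walk A (v # c @ [x])"
        using w2 walk_append[of A "v # b" v "c @ [x]"] by auto
      have s1: "wsign \<sigma> (v # b @ [v]) = 1"
        using less.hyps[of "v # b @ [v]"] w3 p2 by simp
      define q where "q = a @ v # c @ [x]"
      have wq: "walk A q" unfolding q_def using walk_append[of A a v "c @ [x]"] w1 w4 by simp
      have hq: "hd q = last q"
      proof -
        have "hd q = hd p" unfolding q_def using p2 by (cases a) auto
        also have "\<dots> = last p" using less.prems(3) .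
        also have "\<dots> = x" using p2 by simp
        finally show ?thesis unfolding q_def by simp
      qed
      have s2: "wsign \<sigma> q = 1"
        using less.hyps[of q] wq hq p2 unfolding q_def by simp
      have "wsign \<sigma> p = wsign \<sigma> (a @ [v]) * (wsign \<sigma> (v # b @ [v]) * wsign \<sigma> (v # c @ [x]))"
        using p2 wsign_append[of \<sigma> a v "b @ v # c @ [x]"] wsign_append[of \<sigma> "v # b" v "c @ [x]"] by simp
      also have "\<dots> = wsign \<sigma> q" unfolding q_def using s1 wsign_append[of \<sigma> a v "c @ [x]"] by simp
      finally show ?thesis using s2 by simp
    qed
  qed
qed

lemma switching:
  assumes Asym: "\<And>x y. A x y \<Longrightarrow> A y x" and irr: "\<And>x. \<not> A x x" and sym: "\<And>x y. \<sigma> x y = \<sigma> y x"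
    and pm: "\<And>x y. A x y \<Longrightarrow> \<sigma> x y = 1 \<or> \<sigma> x y = -1"
    and cyc: "\<And>cs. 3 \<le> length cs \<Longrightarrow> distinct cs \<Longrightarrow> walk A (cs @ [hd cs]) \<Longrightarrow> wsign \<sigma> (cs @ [hd cs]) > 0"
  shows "\<exists>\<tau>. (\<forall>x. \<tau> x = 1 \<or> \<tau> x = -1) \<and> (\<forall>x y. A x y \<longrightarrow> \<sigma> x y = \<tau> x * \<tau> y)"
proof -
  have rsym: "A\<^sup>*\<^sup>* y x" if "A\<^sup>*\<^sup>* x y" for x y
    using that
  proof (induction rule: rtranclp_induct)
    case base show ?case by simp
  next
    case (step y z) thus ?case using Asym by (meson converse_rtranclp_into_rtranclp)
  qed
  define r where "r x = (SOME z. A\<^sup>*\<^sup>* x z)" for x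
  have r_eq: "r x = r y" if "A\<^sup>*\<^sup>* x y" for x y
  proof -
    have "(\<lambda>z. A\<^sup>*\<^sup>* x z) = (\<lambda>z. A\<^sup>*\<^sup>* y z)"
      using that rsym by (meson rtranclp_trans)
    thus ?thesis unfolding r_def by simp
  qed
  have rx: "A\<^sup>*\<^sup>* (r x) x" for x
  proof -
    have "A\<^sup>*\<^sup>* x (r x)" unfolding r_def by (rule someI[of _ x]) simp
    thus ?thesis by (rule rsym)
  qed
  define P where "P x = (SOME p. walk A p \<and> p \<noteq> [] \<and> hd p = r x \<and> last p = x)" for x
  have P: "walk A (P x) \<and> P x \<noteq> [] \<and> hd (P x) = r x \<and> last (P x) = x" for x
    unfolding P_def by (rule someI_ex) (rule rtranclp_walk[OF rx])
  define \<tau> where "\<tau> x = wsign \<sigma> (P x)" for x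
  have tpm: "\<tau> x = 1 \<or> \<tau> x = -1" for x
    unfolding \<tau>_def using wsign_pm[of A \<sigma>, OF pm] P by blast
  have "\<sigma> x y = \<tau> x * \<tau> y" if Axy: "A x y" for x y
  proof -
    have rr: "r x = r y" using Axy by (intro r_eq) auto
    define p where "p = P x"
    define q where "q = P y"
    have p: "walk A p" "p \<noteq> []" "hd p = r x" "last p = x" using P unfolding p_def by auto
    have q: "walk A q" "q \<noteq> []" "hd q = r x" "last q = y" using P rr unfolding q_def by auto
    have rq1: "rev q \<noteq> []" using q(2) by simp
    have rq2: "hd (rev q) = y" using q(2,4) by (simp add: hd_rev)
    have rq3: "walk A (rev q)" by (rule walk_rev[of A, OF Asym q(1)])
    have rq4: "last (rev q) = r x" using q(2,3) by (simp add: last_rev)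
    have rqe: "rev q = y # tl (rev q)" using rq1 rq2 by (metis list.collapse)
    have pe: "p = butlast p @ [x]" using p by (metis append_butlast_last_id)
    define W where "W = butlast p @ x # rev q"
    have hdl: "hd (xs @ z # ys) = hd (xs @ [z])" for xs ys and z :: 'a by (cases xs) auto
    have w1: "walk A (butlast p @ [x])" using p(1) pe by simp
    have w2: "walk A (x # rev q)" using rq3 Axy rqe by (metis walk.simps(1))
    have "walk A W" unfolding W_def using walk_append[of A "butlast p" x "rev q"] w1 w2 by simp
    moreover have "W \<noteq> []" unfolding W_def by simp
    moreover have "hd W = last W"
    proof -
      have "hd W = hd p" unfolding W_def using hdl pe by metis
      also have "\<dots> = r x" by (rule p(3))
      also have "\<dots> = last W" unfolding W_def using rq1 rq4 by simp
      finally show ?thesis .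
    qed
    ultimately have "wsign \<sigma> W = 1" using closed_walk_sign[of A \<sigma>, OF irr sym pm cyc] by blast
    moreover have "wsign \<sigma> W = \<tau> x * (\<sigma> x y * \<tau> y)"
    proof -
      have "wsign \<sigma> W = wsign \<sigma> (butlast p @ [x]) * wsign \<sigma> (x # rev q)"
        unfolding W_def by (rule wsign_append)
      also have "wsign \<sigma> (butlast p @ [x]) = \<tau> x" using pe unfolding \<tau>_def p_def by simp
      also have "wsign \<sigma> (x # rev q) = \<sigma> x y * wsign \<sigma> (rev q)" using rqe by (metis wsign.simps(1))
      also have "wsign \<sigma> (rev q) = \<tau> y" unfolding \<tau>_def q_def by (rule wsign_rev[of \<sigma>, OF sym])
      finally show ?thesis .
    qed
    ultimately have e: "\<tau> x * (\<sigma> x y * \<tau> y) = 1" by simp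
    show ?thesis using tpm[of x] tpm[of y] e by auto
  qed
  thus ?thesis using tpm by blast
qed




lemma neg1_pow: "(-1::real)^n = 1 \<or> (-1::real)^n = -1"
  by (cases "even n") auto

lemma faces_card: "F \<in> faces K j \<Longrightarrow> card F = j + 1"
  unfolding faces_def by simp

lemma inc_sgn_pm:
  assumes "G \<in> faces K i" "b \<in> faces K (i+1)" "G \<subseteq> b"
  shows "inc_sgn ori G b = 1 \<or> inc_sgn ori G b = -1"
proof -
  have c: "card b = card G + 1" using assms(1,2) by (simp add: faces_card)
  obtain j m where "inc_sgn ori G b = (-1)^j * (-1)^m"
    unfolding inc_sgn_def perm_sign_def Let_def using assms(3) c by auto
  thus ?thesis using neg1_pow[of j] neg1_pow[of m] by auto
qed

lemma inc_sgn_zero: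
  assumes "\<not> G \<subseteq> b"
  shows "inc_sgn ori G b = 0"
  unfolding inc_sgn_def using assms by auto

lemma abs_inc_sgn:
  assumes "G \<in> faces K i" "b \<in> faces K (i+1)"
  shows "\<bar>inc_sgn ori G b\<bar> = (if G \<subseteq> b then 1 else 0)"
proof (cases "G \<subseteq> b")
  case True
  hence "inc_sgn ori G b = 1 \<or> inc_sgn ori G b = -1" by (rule inc_sgn_pm[OF assms])
  thus ?thesis using True by auto
next
  case False thus ?thesis by (simp add: inc_sgn_zero)
qed

lemma faces_disj: "x \<in> faces K i \<Longrightarrow> x \<in> faces K (i+1) \<Longrightarrow> False"
  by (simp add: faces_def)

lemma B_adj_sym: "B_adj K i x y \<Longrightarrow> B_adj K i y x"
  unfolding B_adj_def by auto

lemma B_adj_irr: "\<not> B_adj K i x x"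
  unfolding B_adj_def using faces_disj by blast

lemma B_edge_sign_sym: "B_edge_sign ori x y = B_edge_sign ori y x"
proof (cases "x \<subseteq> y")
  case True
  show ?thesis
  proof (cases "y \<subseteq> x")
    case True thus ?thesis using \<open>x \<subseteq> y\<close> by auto
  next
    case False thus ?thesis using True unfolding B_edge_sign_def by simp
  qed
next
  case False
  show ?thesis
  proof (cases "y \<subseteq> x")
    case True thus ?thesis using False unfolding B_edge_sign_def by simp
  next
    case f2: False thus ?thesis using False unfolding B_edge_sign_def by (simp add: inc_sgn_zero)
  qed
qed

lemma B_edge_sign_adj:
  assumes "x \<in> faces K i" "y \<in> faces K (i+1)" "x \<subseteq> y"
  shows "B_edge_sign ori x y = inc_sgn ori x y" "B_edge_sign ori y x = inc_sgn ori x y"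
proof -
  show "B_edge_sign ori x y = inc_sgn ori x y" unfolding B_edge_sign_def using assms by simp
  have "\<not> y \<subseteq> x"
  proof
    assume "y \<subseteq> x" hence "x = y" using assms(3) by auto
    thus False using assms(1,2) faces_disj by blast
  qed
  thus "B_edge_sign ori y x = inc_sgn ori x y" unfolding B_edge_sign_def by simp
qed

lemma B_edge_sign_pm:
  "B_adj K i x y \<Longrightarrow> B_edge_sign ori x y = 1 \<or> B_edge_sign ori x y = -1"
  unfolding B_adj_def using B_edge_sign_adj inc_sgn_pm by metis

lemma cycle_walk:
  "B_cycle K i cs \<longleftrightarrow> (3 \<le> length cs \<and> distinct cs \<and> walk (B_adj K i) (cs @ [hd cs]))"
proof (cases "cs = []")
  case True thus ?thesis unfolding B_cycle_def by simp
next
  case False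
  have eq: "\<forall>k<length cs. (cs @ [hd cs]) ! Suc k = cs ! (Suc k mod length cs)" using False snoc_hd_nth by blast
  have "walk (B_adj K i) (cs @ [hd cs]) = (\<forall>k<length cs. B_adj K i (cs ! k) (cs ! (Suc k mod length cs)))"
    unfolding walk_snoc_iff using eq by simp
  thus ?thesis unfolding B_cycle_def by auto
qed

lemma cycle_sign_wsign:
  "cs \<noteq> [] \<Longrightarrow> cycle_sign ori cs = wsign (B_edge_sign ori) (cs @ [hd cs])"
  unfolding cycle_sign_def wsign_snoc_prod by (rule prod.cong) (simp_all add: snoc_hd_nth)

lemma wsign_switch:
  assumes "\<forall>x y. A x y \<longrightarrow> \<sigma> x y = \<tau> x * \<tau> y" "\<forall>x. \<tau> x * \<tau> x = 1"
  shows "walk A p \<Longrightarrow> p \<noteq> [] \<Longrightarrow> wsign \<sigma> p = \<tau> (hd p) * \<tau> (last p)"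
proof (induction p)
  case (Cons x p)
  show ?case
  proof (cases p)
    case Nil thus ?thesis using assms(2) by simp
  next
    case (Cons y r)
    have "A x y" "walk A p" using Cons.prems \<open>p = y # r\<close> by auto
    hence "wsign \<sigma> (x # p) = \<tau> x * \<tau> y * (\<tau> y * \<tau> (last p))" using Cons.IH assms(1) \<open>p = y # r\<close> by simp
    also have "\<dots> = \<tau> x * \<tau> (last p) * (\<tau> y * \<tau> y)" by (simp add: mult_ac)
    finally show ?thesis using assms(2) \<open>p = y # r\<close> by simp
  qed
qed simp

lemma up_op_switch:
  assumes "\<forall>G\<in>faces K i. \<forall>b\<in>faces K (i+1). s2 G b = \<tau> G * \<tau> b * s1 G b" "\<forall>x. \<tau> x * \<tau> x = 1"
    and F: "F \<in> faces K i"
  shows "up_op K w s2 i (\<lambda>G. \<tau> G * f G) F = \<tau> F * up_op K w s1 i f F"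
proof -
  have inner: "(\<Sum>G\<in>faces K i. s2 G b * (\<tau> G * f G)) = \<tau> b * (\<Sum>G\<in>faces K i. s1 G b * f G)"
    if b: "b \<in> faces K (i+1)" for b
  proof -
    have "(\<Sum>G\<in>faces K i. s2 G b * (\<tau> G * f G)) = (\<Sum>G\<in>faces K i. \<tau> b * (s1 G b * f G) * (\<tau> G * \<tau> G))"
      by (rule sum.cong) (use assms(1) b in \<open>auto simp: mult_ac\<close>)
    also have "\<dots> = (\<Sum>G\<in>faces K i. \<tau> b * (s1 G b * f G))" using assms(2) by simp
    finally show ?thesis by (simp add: sum_distrib_left)
  qed
  have "up_op K w s2 i (\<lambda>G. \<tau> G * f G) F = 1 / w F * (\<Sum>b\<in>faces K (i+1). \<tau> F * (s1 F b * w b * (\<Sum>G\<in>faces K i. s1 G b * f G)) * (\<tau> b * \<tau> b))"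
    unfolding up_op_def by (rule arg_cong[where f="\<lambda>x. 1 / w F * x"], rule sum.cong) (use assms(1) F inner in \<open>auto simp: mult_ac\<close>)
  also have "\<dots> = \<tau> F * up_op K w s1 i f F" unfolding up_op_def using assms(2) by (simp add: sum_distrib_left mult_ac)
  finally show ?thesis .
qed

lemma eig_switch:
  assumes "\<forall>G\<in>faces K i. \<forall>b\<in>faces K (i+1). s2 G b = \<tau> G * \<tau> b * s1 G b" "\<forall>x. \<tau> x * \<tau> x = 1"
  shows "up_eigenvalues K w s1 i \<subseteq> up_eigenvalues K w s2 i"
proof
  fix \<mu> assume "\<mu> \<in> up_eigenvalues K w s1 i"
  then obtain f where f: "\<forall>F. F \<notin> faces K i \<longrightarrow> f F = 0" "\<exists>F\<in>faces K i. f F \<noteq> 0"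
      "\<forall>F\<in>faces K i. up_op K w s1 i f F = \<mu> * f F"
    unfolding up_eigenvalues_def by blast
  have t0: "\<tau> x \<noteq> 0" for x using assms(2)[rule_format, of x] by auto
  define g where "g = (\<lambda>G. \<tau> G * f G)"
  have "\<forall>F. F \<notin> faces K i \<longrightarrow> g F = 0" using f(1) unfolding g_def by simp
  moreover have "\<exists>F\<in>faces K i. g F \<noteq> 0" using f(2) t0 unfolding g_def by auto
  moreover have "\<forall>F\<in>faces K i. up_op K w s2 i g F = \<mu> * g F"
  proof
    fix F assume F: "F \<in> faces K i"
    have "up_op K w s2 i g F = \<tau> F * up_op K w s1 i f F" unfolding g_def by (rule up_op_switch[OF assms F])
    thus "up_op K w s2 i g F = \<mu> * g F" using f(3) F unfolding g_def by simp
  qed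
  ultimately show "\<mu> \<in> up_eigenvalues K w s2 i" unfolding up_eigenvalues_def by blast
qed




lemma abs_sum_eq_pos:
  fixes x :: "'a \<Rightarrow> real"
  assumes "finite A" "(\<Sum>a\<in>A. x a) = (\<Sum>a\<in>A. \<bar>x a\<bar>)"
  shows "\<forall>a\<in>A. x a \<ge> 0"
proof -
  have "(\<Sum>a\<in>A. \<bar>x a\<bar> - x a) = 0" using assms(2) by (simp add: sum_subtractf)
  hence "\<forall>a\<in>A. \<bar>x a\<bar> - x a = 0" using sum_nonneg_eq_0_iff[OF assms(1), of "\<lambda>a. \<bar>x a\<bar> - x a"] by simp
  thus ?thesis by (metis abs_ge_zero eq_iff_diff_eq_0)
qed

lemma abs_sum_eq_neg:
  fixes x :: "'a \<Rightarrow> real"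
  assumes "finite A" "- (\<Sum>a\<in>A. x a) = (\<Sum>a\<in>A. \<bar>x a\<bar>)"
  shows "\<forall>a\<in>A. x a \<le> 0"
proof -
  have "(\<Sum>a\<in>A. - x a) = (\<Sum>a\<in>A. \<bar>- x a\<bar>)" using assms(2) by (simp add: sum_negf)
  hence "\<forall>a\<in>A. - x a \<ge> 0" by (rule abs_sum_eq_pos[OF assms(1)])
  thus ?thesis by auto
qed

lemma sum_zero_each:
  fixes f :: "'a \<Rightarrow> real"
  assumes "finite A" "\<forall>a\<in>A. f a \<ge> 0" "sum f A = 0" "a \<in> A"
  shows "f a = 0"
  using sum_nonneg_eq_0_iff[of A f] assms by auto

lemma sq_le: "\<bar>x::real\<bar> \<le> y \<Longrightarrow> x^2 \<le> y^2"
proof -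
  assume h: "\<bar>x\<bar> \<le> y"
  have "\<bar>x\<bar>^2 \<le> y^2" by (rule power_mono[OF h]) simp
  thus ?thesis by simp
qed

lemma sgn_sq: "(y::real) \<noteq> 0 \<Longrightarrow> sgn y * sgn y = 1"
  by (cases "y > 0") auto

theorem mainTheorem2:
  fixes K :: "'v set set" and ori :: "'v set \<Rightarrow> 'v list" and w :: "'v set \<Rightarrow> real" and i :: nat
  assumes "simplicial_complex K"
    and "is_orientation K ori"
    and "is_weight K w"
    and "faces K i \<noteq> {}"
  shows "lmax_up_laplacian K ori w i \<le> lmax_up_signless K ori w i
    \<and> (B_balanced K ori i \<longrightarrow> lmax_up_laplacian K ori w i = lmax_up_signless K ori w i)
    \<and> (B_connected K i \<longrightarrow>
         (lmax_up_laplacian K ori w i = lmax_up_signless K ori w i \<longleftrightarrow> B_balanced K ori i))"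
proof -
  have finK: "finite K" using assms(1) unfolding simplicial_complex_def by simp
  have finS: "finite (faces K i)" and finT: "finite (faces K (i+1))" unfolding faces_def using finK by auto
  have wS: "\<forall>F\<in>faces K i. w F > 0" and wT: "\<forall>F\<in>faces K (i+1). w F > 0"
    using assms(3) unfolding is_weight_def faces_def by auto
  note neS = assms(4)
  note ctx = finS finT wS wT neS
  define S where "S = faces K i"
  define T where "T = faces K (i+1)"
  define sL where "sL = inc_sgn ori"
  define sQ where "sQ = (\<lambda>F Fb. \<bar>inc_sgn ori F Fb\<bar>)"
  define lL where "lL = lmax_up_laplacian K ori w i"
  define lQ where "lQ = lmax_up_signless K ori w i"
  have lL': "lL = Max (up_eigenvalues K w sL i)" unfolding lL_def sL_def lmax_up_laplacian_def ..
  have lQ': "lQ = Max (up_eigenvalues K w sQ i)" unfolding lQ_def sQ_def lmax_up_signless_def ..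
  have specL: "finite (up_eigenvalues K w sL i) \<and> lL \<in> up_eigenvalues K w sL i \<and> (\<forall>g. Ew w sL S T g \<le> lL * Nw w S g)"
    unfolding lL' S_def T_def by (rule spec[OF ctx])
  have specQ: "finite (up_eigenvalues K w sQ i) \<and> lQ \<in> up_eigenvalues K w sQ i \<and> (\<forall>g. Ew w sQ S T g \<le> lQ * Nw w S g)"
    unfolding lQ' S_def T_def by (rule spec[OF ctx])
  have sQ_abs: "sQ G b = \<bar>sL G b\<bar>" for G b unfolding sQ_def sL_def ..
  have sQ_val: "sQ G b = (if G \<subseteq> b then 1 else 0)" if "G \<in> S" "b \<in> T" for G b
    unfolding sQ_def using abs_inc_sgn that unfolding S_def T_def by blast
  have DQ: "Dv sQ S (\<lambda>F. \<bar>f F\<bar>) b = (\<Sum>G\<in>S. \<bar>sL G b * f G\<bar>)" for f b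
    unfolding Dv_def sQ_abs by (simp add: abs_mult)
  have DQ_nonneg: "Dv sQ S (\<lambda>F. \<bar>f F\<bar>) b \<ge> 0" for f b unfolding DQ by (rule sum_nonneg) simp
  have DLQ: "\<bar>Dv sL S f b\<bar> \<le> Dv sQ S (\<lambda>F. \<bar>f F\<bar>) b" for f b
  proof -
    have "\<bar>Dv sL S f b\<bar> \<le> (\<Sum>G\<in>S. \<bar>sL G b * f G\<bar>)" unfolding Dv_def by (rule sum_abs)
    thus ?thesis using DQ[of f b] by simp
  qed
  have EwLQ: "Ew w sL S T f \<le> Ew w sQ S T (\<lambda>F. \<bar>f F\<bar>)" for f
    unfolding Ew_def
  proof (rule sum_mono)
    fix b assume b: "b \<in> T"
    have "(Dv sL S f b)^2 \<le> (Dv sQ S (\<lambda>F. \<bar>f F\<bar>) b)^2"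
      by (rule sq_le[OF DLQ[of f b]])
    thus "w b * (Dv sL S f b)^2 \<le> w b * (Dv sQ S (\<lambda>F. \<bar>f F\<bar>) b)^2"
      using wT b unfolding T_def by (simp add: mult_left_mono less_imp_le)
  qed
  have Nabs: "Nw w S (\<lambda>F. \<bar>f F\<bar>) = Nw w S f" for f unfolding Nw_def by simp
  obtain f where f: "\<forall>F. F \<notin> S \<longrightarrow> f F = 0" "\<exists>F\<in>S. f F \<noteq> 0" "\<forall>F\<in>S. up_op K w sL i f F = lL * f F"
    using specL unfolding up_eigenvalues_def S_def by blast
  obtain F1 where F1: "F1 \<in> S" "f F1 \<noteq> 0" using f(2) by blast
  have Np: "Nw w S f > 0" using Nw_pos[where g=f, OF finS wS] F1 unfolding S_def by blast
  have rayL: "Ew w sL S T f = lL * Nw w S f"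
    unfolding S_def T_def by (rule eig_rayleigh[OF ctx]) (use f(3) in \<open>simp add: S_def\<close>)
  have chain1: "lL * Nw w S f \<le> Ew w sQ S T (\<lambda>F. \<bar>f F\<bar>)" using rayL EwLQ[of f] by simp
  have chain2: "Ew w sQ S T (\<lambda>F. \<bar>f F\<bar>) \<le> lQ * Nw w S f" using specQ Nabs[of f] by metis
  have part1: "lL \<le> lQ" using chain1 chain2 Np by (metis mult_le_cancel_right_pos order_trans)
  have part2: "lL = lQ" if bal: "B_balanced K ori i"
  proof -
    have cyc: "wsign (B_edge_sign ori) (cs @ [hd cs]) > 0"
      if "3 \<le> length cs" "distinct cs" "walk (B_adj K i) (cs @ [hd cs])" for cs
    proof -
      have "B_cycle K i cs" using that cycle_walk by blast
      hence "cycle_sign ori cs > 0" using bal unfolding B_balanced_def by blast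
      moreover have "cs \<noteq> []" using that(1) by auto
      ultimately show ?thesis using cycle_sign_wsign by metis
    qed
    obtain \<tau> where tpm: "\<forall>x. \<tau> x = 1 \<or> \<tau> x = -1" and tedge: "\<forall>x y. B_adj K i x y \<longrightarrow> B_edge_sign ori x y = \<tau> x * \<tau> y"
    proof -
      have a1: "\<And>x y. B_adj K i x y \<Longrightarrow> B_adj K i y x" by (rule B_adj_sym)
      have a2: "\<And>x. \<not> B_adj K i x x" by (rule B_adj_irr)
      have a3: "\<And>x y. B_edge_sign ori x y = B_edge_sign ori y x" by (rule B_edge_sign_sym)
      have a4: "\<And>x y. B_adj K i x y \<Longrightarrow> B_edge_sign ori x y = 1 \<or> B_edge_sign ori x y = -1" by (rule B_edge_sign_pm)
      show ?thesis using switching[where A="B_adj K i" and \<sigma>="B_edge_sign ori", OF a1 a2 a3 a4 cyc] that by blast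
    qed
    have tt: "\<forall>x. \<tau> x * \<tau> x = 1" using tpm by (metis mult_minus1 mult_1 minus_minus)
    have rel: "\<forall>G\<in>faces K i. \<forall>b\<in>faces K (i+1). sQ G b = \<tau> G * \<tau> b * sL G b"
    proof (intro ballI)
      fix G b assume G: "G \<in> faces K i" and b: "b \<in> faces K (i+1)"
      show "sQ G b = \<tau> G * \<tau> b * sL G b"
      proof (cases "G \<subseteq> b")
        case True
        have "B_adj K i G b" unfolding B_adj_def using G b True by blast
        hence "B_edge_sign ori G b = \<tau> G * \<tau> b" using tedge by blast
        hence e: "sL G b = \<tau> G * \<tau> b" using B_edge_sign_adj(1)[OF G b True] unfolding sL_def by simp
        have "sQ G b = 1" using sQ_val G b True unfolding S_def T_def by simp
        moreover have "\<tau> G * \<tau> b * (\<tau> G * \<tau> b) = 1" using tt by (metis mult.assoc mult.commute mult_1)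
        ultimately show ?thesis using e by simp
      next
        case False thus ?thesis unfolding sQ_def sL_def by (simp add: inc_sgn_zero)
      qed
    qed
    have rel': "\<forall>G\<in>faces K i. \<forall>b\<in>faces K (i+1). sL G b = \<tau> G * \<tau> b * sQ G b"
    proof (intro ballI)
      fix G b assume G: "G \<in> faces K i" and b: "b \<in> faces K (i+1)"
      have "\<tau> G * \<tau> b * sQ G b = (\<tau> G * \<tau> G) * (\<tau> b * \<tau> b) * sL G b" using rel G b by (simp add: mult_ac)
      thus "sL G b = \<tau> G * \<tau> b * sQ G b" using tt by simp
    qed
    have "up_eigenvalues K w sL i = up_eigenvalues K w sQ i"
      using eig_switch[OF rel tt] eig_switch[OF rel' tt] by blast
    thus ?thesis unfolding lL' lQ' by simp
  qed
  have part3: "B_balanced K ori i" if conn: "B_connected K i" and eq: "lL = lQ"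
  proof -
    define g where "g = (\<lambda>F. \<bar>f F\<bar>)"
    have EQ: "Ew w sQ S T g = lQ * Nw w S g" and ELQ: "Ew w sL S T f = Ew w sQ S T g"
      using chain1 chain2 eq rayL Nabs[of f] EwLQ[of f] unfolding g_def by auto
    have leQ: "\<forall>g. Ew w sQ (faces K i) (faces K (i+1)) g \<le> lQ * Nw w (faces K i) g" using specQ unfolding S_def T_def by blast
    have gQ: "up_op K w sQ i g F = lQ * g F" if "F \<in> S" for F
      using eig_from_max[OF ctx leQ] EQ that unfolding S_def T_def by blast
    have sq_eq: "(Dv sL S f b)^2 = (Dv sQ S g b)^2" if b: "b \<in> T" for b
    proof -
      have "(\<Sum>b\<in>T. w b * (Dv sQ S g b)^2 - w b * (Dv sL S f b)^2) = 0"
        using ELQ unfolding Ew_def by (simp add: sum_subtractf)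
      moreover have "\<forall>b\<in>T. w b * (Dv sQ S g b)^2 - w b * (Dv sL S f b)^2 \<ge> 0"
        using EwLQ unfolding Ew_def
      proof -
        { fix b assume b: "b \<in> T"
          have "(Dv sL S f b)^2 \<le> (Dv sQ S g b)^2"
            using sq_le[OF DLQ[of f b]] unfolding g_def .
          hence "w b * (Dv sQ S g b)^2 - w b * (Dv sL S f b)^2 \<ge> 0"
            using wT b unfolding T_def by (simp add: mult_left_mono less_imp_le) }
        thus ?thesis by blast
      qed
      ultimately have "w b * (Dv sQ S g b)^2 - w b * (Dv sL S f b)^2 = 0"
        by (intro sum_zero_each[OF finT[folded T_def], of "\<lambda>b. w b * (Dv sQ S g b)^2 - w b * (Dv sL S f b)^2"] b)
      moreover have "w b > 0" using wT b unfolding T_def by blast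
      ultimately show ?thesis by (simp add: right_diff_distrib[symmetric])
    qed
    have samesign: "(\<forall>G\<in>S. sL G b * f G \<ge> 0) \<or> (\<forall>G\<in>S. sL G b * f G \<le> 0)" if b: "b \<in> T" for b
    proof -
      have "Dv sL S f b = Dv sQ S g b \<or> Dv sL S f b = - Dv sQ S g b" using sq_eq[OF b] by (simp add: power2_eq_iff)
      thus ?thesis
      proof
        assume "Dv sL S f b = Dv sQ S g b"
        hence "(\<Sum>G\<in>S. sL G b * f G) = (\<Sum>G\<in>S. \<bar>sL G b * f G\<bar>)" unfolding g_def DQ unfolding Dv_def .
        hence "\<forall>G\<in>S. sL G b * f G \<ge> 0" by (rule abs_sum_eq_pos[OF finS[folded S_def], of "\<lambda>G. sL G b * f G"])
        thus ?thesis by (rule disjI1)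
      next
        assume "Dv sL S f b = - Dv sQ S g b"
        hence "- (\<Sum>G\<in>S. sL G b * f G) = (\<Sum>G\<in>S. \<bar>sL G b * f G\<bar>)" unfolding g_def DQ unfolding Dv_def by simp
        hence "\<forall>G\<in>S. sL G b * f G \<le> 0" by (rule abs_sum_eq_neg[OF finS[folded S_def], of "\<lambda>G. sL G b * f G"])
        thus ?thesis by (rule disjI2)
      qed
    qed
    have zprop: "f G = 0" if F: "F \<in> S" "f F = 0" and b: "b \<in> T" "F \<subseteq> b" and G: "G \<in> S" "G \<subseteq> b" for F b G
    proof -
      have "up_op K w sQ i g F = 0" using gQ[OF F(1)] F(2) unfolding g_def by simp
      hence "(\<Sum>b\<in>T. sQ F b * w b * Dv sQ S g b) = 0"
        using wS F(1) unfolding up_op_def S_def T_def Dv_def by auto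
      moreover have "\<forall>b\<in>T. sQ F b * w b * Dv sQ S g b \<ge> 0"
        using wT DQ_nonneg unfolding g_def sQ_def T_def by (simp add: less_imp_le)
      ultimately have "sQ F b * w b * Dv sQ S g b = 0"
        by (intro sum_zero_each[OF finT[folded T_def], of "\<lambda>b. sQ F b * w b * Dv sQ S g b"] b(1))
      moreover have "sQ F b = 1" using sQ_val F(1) b by simp
      moreover have "w b > 0" using wT b(1) unfolding T_def by blast
      ultimately have "Dv sQ S g b = 0" by simp
      hence "(\<Sum>G\<in>S. sQ G b * g G) = 0" unfolding Dv_def .
      moreover have "\<forall>G\<in>S. sQ G b * g G \<ge> 0" unfolding sQ_def g_def by simp
      ultimately have "sQ G b * g G = 0"
        by (intro sum_zero_each[OF finS[folded S_def], of "\<lambda>G. sQ G b * g G"] G(1))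
      moreover have "sQ G b = 1" using sQ_val G b(1) by simp
      ultimately show ?thesis unfolding g_def by simp
    qed
    define Z where "Z x \<longleftrightarrow> (x \<in> S \<and> f x = 0) \<or> (x \<in> T \<and> (\<forall>G\<in>S. G \<subseteq> x \<longrightarrow> f G = 0))" for x
    have Zstep: "Z y" if "B_adj K i x y" "Z x" for x y
      using that(1) unfolding B_adj_def
    proof
      assume a: "x \<in> faces K i \<and> y \<in> faces K (i + 1) \<and> x \<subseteq> y"
      have xS: "x \<in> S" and yT: "y \<in> T" using a unfolding S_def T_def by auto
      have xnT: "x \<notin> T" using xS faces_disj unfolding S_def T_def by blast
      have fx: "f x = 0" using that(2) xnT unfolding Z_def by auto
      have "\<forall>G\<in>S. G \<subseteq> y \<longrightarrow> f G = 0" using zprop[OF xS fx yT] a by blast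
      thus "Z y" unfolding Z_def using yT by blast
    next
      assume a: "y \<in> faces K i \<and> x \<in> faces K (i + 1) \<and> y \<subseteq> x"
      have yS: "y \<in> S" and xT: "x \<in> T" using a unfolding S_def T_def by auto
      have xnS: "x \<notin> S" using xT faces_disj unfolding S_def T_def by blast
      have "\<forall>G\<in>S. G \<subseteq> x \<longrightarrow> f G = 0" using that(2) xnS unfolding Z_def by auto
      hence "f y = 0" using yS a by blast
      thus "Z y" unfolding Z_def using yS by blast
    qed
    have Zreach: "Z y" if "(B_adj K i)\<^sup>*\<^sup>* x y" "Z x" for x y
      using that by (induction rule: rtranclp_induct) (auto intro: Zstep)
    have fnz: "f F \<noteq> 0" if F: "F \<in> S" for F
    proof
      assume "f F = 0"
      hence "Z F" unfolding Z_def using F by blast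
      moreover have "(B_adj K i)\<^sup>*\<^sup>* F F1" using conn F F1(1) unfolding B_connected_def B_verts_def S_def by blast
      ultimately have "Z F1" by (rule Zreach[rotated])
      thus False using F1 faces_disj unfolding Z_def S_def T_def by blast
    qed
    have below: "\<exists>G\<in>S. G \<subseteq> b" if b: "b \<in> T" for b
    proof -
      have bK: "b \<in> K" and cb: "card b = i + 2" using b unfolding T_def faces_def by auto
      hence "b \<noteq> {}" by auto
      then obtain v where v: "v \<in> b" by blast
      have "finite b" using cb by (metis card.infinite zero_neq_numeral add_is_0)
      have "b - {v} \<in> K" using assms(1) bK unfolding simplicial_complex_def by blast
      moreover have "card (b - {v}) = i + 1" using cb v \<open>finite b\<close> by simp
      ultimately show ?thesis unfolding S_def faces_def by blast
    qed
    define G0 where "G0 b = (SOME G. G \<in> S \<and> G \<subseteq> b)" for b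
    have G0: "G0 b \<in> S \<and> G0 b \<subseteq> b" if "b \<in> T" for b
      unfolding G0_def using below[OF that] by (metis (mono_tags, lifting) someI_ex)
    define \<tau> where "\<tau> x = (if x \<in> S then sgn (f x) else if x \<in> T then sgn (sL (G0 x) x * f (G0 x)) else 1)" for x
    have sLpm: "sL G b = 1 \<or> sL G b = -1" if "G \<in> S" "b \<in> T" "G \<subseteq> b" for G b
      using inc_sgn_pm that unfolding sL_def S_def T_def by blast
    have tt: "\<forall>x. \<tau> x * \<tau> x = 1"
    proof
      fix x
      show "\<tau> x * \<tau> x = 1"
      proof (cases "x \<in> S")
        case True thus ?thesis unfolding \<tau>_def using sgn_sq fnz by simp
      next
        case False
        show ?thesis
        proof (cases "x \<in> T")
          case True
          have "sL (G0 x) x * f (G0 x) \<noteq> 0" using sLpm[of "G0 x" x] G0[OF True] fnz[of "G0 x"] True by auto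
          thus ?thesis unfolding \<tau>_def using False True sgn_sq by simp
        next
          case f2: False thus ?thesis unfolding \<tau>_def using False by simp
        qed
      qed
    qed
    have edge: "sL G b = \<tau> G * \<tau> b" if G: "G \<in> S" and b: "b \<in> T" and Gb: "G \<subseteq> b" for G b
    proof -
      define H where "H = G0 b"
      have H: "H \<in> S" "H \<subseteq> b" using G0[OF b] unfolding H_def by auto
      have nzG: "sL G b * f G \<noteq> 0" using sLpm[OF G b Gb] fnz[OF G] by auto
      have nzH: "sL H b * f H \<noteq> 0" using sLpm[OF H(1) b H(2)] fnz[OF H(1)] by auto
      have "sgn (sL G b * f G) = sgn (sL H b * f H)"
        using samesign[OF b] nzG nzH G H(1) by (smt (verit) sgn_neg sgn_pos)
      hence tb: "\<tau> b = sgn (sL G b * f G)"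
        unfolding \<tau>_def H_def using b faces_disj G unfolding S_def T_def by auto
      have "sgn (sL G b) = sL G b" using sLpm[OF G b Gb] by auto
      hence "\<tau> b = sL G b * \<tau> G" using tb G unfolding \<tau>_def by (simp add: sgn_mult)
      hence "\<tau> G * \<tau> b = sL G b * (\<tau> G * \<tau> G)" by (simp add: mult_ac)
      thus ?thesis using tt by simp
    qed
    have tedge: "\<forall>x y. B_adj K i x y \<longrightarrow> B_edge_sign ori x y = \<tau> x * \<tau> y"
    proof (intro allI impI)
      fix x y assume "B_adj K i x y"
      thus "B_edge_sign ori x y = \<tau> x * \<tau> y" unfolding B_adj_def
      proof
        assume a: "x \<in> faces K i \<and> y \<in> faces K (i + 1) \<and> x \<subseteq> y"
        thus ?thesis using B_edge_sign_adj(1)[of x K i y ori] edge[of x y] unfolding sL_def S_def T_def by simp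
      next
        assume a: "y \<in> faces K i \<and> x \<in> faces K (i + 1) \<and> y \<subseteq> x"
        thus ?thesis using B_edge_sign_adj(2)[of y K i x ori] edge[of y x] unfolding sL_def S_def T_def by (simp add: mult.commute)
      qed
    qed
    show ?thesis unfolding B_balanced_def
    proof (intro allI impI)
      fix cs assume "B_cycle K i cs"
      hence cw: "walk (B_adj K i) (cs @ [hd cs])" and ne: "cs \<noteq> []" using cycle_walk[of K i cs] by auto
      have "cycle_sign ori cs = wsign (B_edge_sign ori) (cs @ [hd cs])" by (rule cycle_sign_wsign[OF ne])
      also have "\<dots> = \<tau> (hd (cs @ [hd cs])) * \<tau> (last (cs @ [hd cs]))"
        by (rule wsign_switch[OF tedge tt cw]) simp
      also have "\<dots> = 1" using ne tt by (simp add: hd_append)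
      finally show "cycle_sign ori cs > 0" by simp
    qed
  qed
  show ?thesis
    unfolding lL_def[symmetric] lQ_def[symmetric]
    using part1 part2 part3 by blast
qed


end
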